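(* For every $m\in\mathbb{Q}$ with $m\notin\{0,1,-1\}$, consider the tetrahedron in $\mathbb{R}^3$ with vertices \begin{align*} P_1&=(0,0,0),\qquad P_2=\big(10(m^4-1)(m^4+3m^2+1),\,0,\,0\big),\\ P_3&=\Big(\tfrac{2(m^2-1)(m^2+4)(3m^2+2)^2}{5},\ \tfrac{(m^2+4)(2m^2+3)(3m^2+2)(4m^2+1)}{5},\ 0\Big),\\ P_4&=\Big(\tfrac{2(m^2-1)(2m^2+3)^2(4m^2+1)}{5},\ -\tfrac{(2m^2+3)(2m^2-5m-2)(2m^2+5m-2)(3m^2+2)}{5},\ 4(m^2-1)m(2m^2+3)(3m^2+2)\Big). \end{align*} Then its four faces are congruent triangles (opposite edges have equal length), and all six edge lengths, all four face areas, and the volume of this tetrahedron are rational numbers.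
   Context: No further context is needed. *)

theory Defs
  imports "HOL-Analysis.Analysis"
begin

definition triangle_area :: "real^3 \<Rightarrow> real^3 \<Rightarrow> real^3 \<Rightarrow> real" where
  "triangle_area A B C = norm (cross3 (B - A) (C - A)) / 2"

definition tetra_volume :: "real^3 \<Rightarrow> real^3 \<Rightarrow> real^3 \<Rightarrow> real^3 \<Rightarrow> real" where
  "tetra_volume A B C D = \<bar>(B - A) \<bullet> cross3 (C - A) (D - A)\<bar> / 6"

end

theory Submission
  imports Defs
begin

lemma in3: "(x::real^3) \<bullet> y = x$1*y$1 + x$2*y$2 + x$3*y$3"
  by (simp add: inner_vec_def sum_3)

lemma nrm: "(x::real^3) \<bullet> x = p^2 \<Longrightarrow> norm x = \<bar>p\<bar>"
  by (simp add: norm_eq_sqrt_inner)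

lemma cr: "cross3 a b = vector [a$2 * b$3 - a$3 * b$2, a$3 * b$1 - a$1 * b$3, a$1 * b$2 - a$2 * b$1]"
  by (simp add: cross3_def)

theorem mainTheorem9:
  fixes m :: real and P1 P2 P3 P4 :: "real^3"
  assumes "m \<in> \<rat>" and "m \<notin> {0, 1, -1}"
    and "P1 = vector [0, 0, 0]"
    and "P2 = vector [10 * (m^4 - 1) * (m^4 + 3*m^2 + 1), 0, 0]"
    and "P3 = vector [2 * (m^2 - 1) * (m^2 + 4) * (3*m^2 + 2)^2 / 5,
                      (m^2 + 4) * (2*m^2 + 3) * (3*m^2 + 2) * (4*m^2 + 1) / 5,
                      0]"
    and "P4 = vector [2 * (m^2 - 1) * (2*m^2 + 3)^2 * (4*m^2 + 1) / 5,
                      - ((2*m^2 + 3) * (2*m^2 - 5*m - 2) * (2*m^2 + 5*m - 2) * (3*m^2 + 2) / 5),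
                      4 * (m^2 - 1) * m * (2*m^2 + 3) * (3*m^2 + 2)]"
  shows "dist P1 P2 = dist P3 P4 \<and> dist P1 P3 = dist P2 P4 \<and> dist P1 P4 = dist P2 P3
    \<and> dist P1 P2 \<in> \<rat> \<and> dist P1 P3 \<in> \<rat> \<and> dist P1 P4 \<in> \<rat>
    \<and> dist P2 P3 \<in> \<rat> \<and> dist P2 P4 \<in> \<rat> \<and> dist P3 P4 \<in> \<rat>
    \<and> triangle_area P1 P2 P3 \<in> \<rat> \<and> triangle_area P1 P2 P4 \<in> \<rat>
    \<and> triangle_area P1 P3 P4 \<in> \<rat> \<and> triangle_area P2 P3 P4 \<in> \<rat>
    \<and> tetra_volume P1 P2 P3 P4 \<in> \<rat>"
proof -
  define a where "a = 10*m^8 + 30*m^6 - 30*m^2 - 10"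
  define b where "b = 6*m^8 + 34*m^6 + 47*m^4 + 30*m^2 + 8"
  define c where "c = 8*m^8 + 30*m^6 + 47*m^4 + 34*m^2 + 6"
  define q where "q = 48*m^16 + 452*m^14 + 1462*m^12 + 1778*m^10 - 1778*m^6 - 1462*m^4 - 452*m^2 - 48"
  define v where "v = 1152*m + 12192*m^3 + 46400*m^5 + 69800*m^7 - 2000*m^9 - 127544*m^11 - 127544*m^13 - 2000*m^15 + 69800*m^17 + 46400*m^19 + 12192*m^21 + 1152*m^23"
  have r: "a \<in> \<rat>" "b \<in> \<rat>" "c \<in> \<rat>" "q \<in> \<rat>" "v \<in> \<rat>"
    using assms(1) unfolding a_def b_def c_def q_def v_def by (auto intro!: Rats_add Rats_diff Rats_mult Rats_power)
  have ra: "\<bar>x\<bar> \<in> \<rat>" if "x \<in> \<rat>" for x :: real using that by (simp add: Rats_abs_iff)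
  have d12: "dist P1 P2 = \<bar>a\<bar>" unfolding dist_norm
    by (rule nrm, unfold in3, simp add: assms a_def, algebra)
  have d34: "dist P3 P4 = \<bar>a\<bar>" unfolding dist_norm
    by (rule nrm, unfold in3, simp add: assms a_def, algebra)
  have d13: "dist P1 P3 = \<bar>b\<bar>" unfolding dist_norm
    by (rule nrm, unfold in3, simp add: assms b_def, algebra)
  have d24: "dist P2 P4 = \<bar>b\<bar>" unfolding dist_norm
    by (rule nrm, unfold in3, simp add: assms b_def, algebra)
  have d14: "dist P1 P4 = \<bar>c\<bar>" unfolding dist_norm
    by (rule nrm, unfold in3, simp add: assms c_def, algebra)
  have d23: "dist P2 P3 = \<bar>c\<bar>" unfolding dist_norm
    by (rule nrm, unfold in3, simp add: assms c_def, algebra)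
  have t1: "triangle_area P1 P2 P3 = \<bar>q\<bar>/2" unfolding triangle_area_def
    by (subst nrm[where p=q], unfold in3 cr, simp add: assms q_def, algebra, simp)
  have t2: "triangle_area P1 P2 P4 = \<bar>q\<bar>/2" unfolding triangle_area_def
    by (subst nrm[where p=q], unfold in3 cr, simp add: assms q_def, algebra, simp)
  have t3: "triangle_area P1 P3 P4 = \<bar>q\<bar>/2" unfolding triangle_area_def
    by (subst nrm[where p=q], unfold in3 cr, simp add: assms q_def, algebra, simp)
  have t4: "triangle_area P2 P3 P4 = \<bar>q\<bar>/2" unfolding triangle_area_def
    by (subst nrm[where p=q], unfold in3 cr, simp add: assms q_def, algebra, simp)
  have vv: "(P2 - P1) \<bullet> cross3 (P3 - P1) (P4 - P1) = v"
    unfolding in3 cr by (simp add: assms v_def, algebra)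
  show ?thesis
    using r unfolding d12 d34 d13 d24 d14 d23 t1 t2 t3 t4 tetra_volume_def vv
    by (auto intro!: ra Rats_divide)
qed

end
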